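(* Let $U$ be an $N\times N$ unitary matrix with no zero entries, let $S,T$ be $N\times N$ enphased permutation matrices, and let $V=SUT^{-1}$. Write $S=D_S\Pi_S$ and $T=D_T\Pi_T$ with $D_S,D_T$ unitary diagonal and $\Pi_S,\Pi_T$ permutation matrices. Then: (a) $\mathcal I_V=\Phi_{\Pi_S,\Pi_T}\,\mathcal I_U\,\Phi_{\Pi_S,\Pi_T}^{-1}$, i.e. $\mathcal I_U$ and $\mathcal I_V$ are similar with similarity operator $\Phi_{\Pi_S,\Pi_T}$; (b) the operators $\mathcal J_U=\mathcal C_U\mathcal D_U^{-1}$ and $\mathcal J_V=\mathcal C_V\mathcal D_V^{-1}$ satisfy $\mathcal J_V=\Phi_{S,S}\,\mathcal J_U\,\Phi_{S,S}^{-1}$.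
   Context: An enphased permutation matrix is a product of a permutation matrix and a unitary diagonal matrix; such a factorization $S=D\Pi$ is unique. $\circ$ denotes the entrywise (Hadamard) product and $X^*$ the conjugate transpose. For an $N\times N$ unitary $W$ with no zero entries, the linear operators $\mathcal C_W,\mathcal D_W$ on $\mathbb C^{N\times N}$ are $\mathcal C_W(F)=(F\circ W)W^*$ and $\mathcal D_W(F)=W(\overline F\circ W)^*$; both are invertible, and $\mathcal I_W=\mathcal C_W^{-1}\mathcal D_W$ (the Berezin transform). For matrices $A,B$ with $B$ invertible, $\Phi_{A,B}$ is the operator $X\mapsto AXB^{-1}$ on $\mathbb C^{N\times N}$. *)

theory Defs
  imports "HOL-Analysis.Analysis"
begin

type_synonym 'n cmat = "complex^'n^'n"

definition adjoint_mat :: "'n::finite cmat \<Rightarrow> 'n cmat" where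
  "adjoint_mat A = (\<chi> i j. cnj (A $ j $ i))"

definition conj_mat :: "'n::finite cmat \<Rightarrow> 'n cmat" where
  "conj_mat A = (\<chi> i j. cnj (A $ i $ j))"

definition hadamard :: "'n::finite cmat \<Rightarrow> 'n cmat \<Rightarrow> 'n cmat" where
  "hadamard A B = (\<chi> i j. A $ i $ j * B $ i $ j)"

definition unitary_mat :: "'n::finite cmat \<Rightarrow> bool" where
  "unitary_mat U \<longleftrightarrow> U ** adjoint_mat U = mat 1 \<and> adjoint_mat U ** U = mat 1"

definition no_zero_entries :: "'n::finite cmat \<Rightarrow> bool" where
  "no_zero_entries U \<longleftrightarrow> (\<forall>i j. U $ i $ j \<noteq> 0)"

definition permutation_mat :: "'n::finite cmat \<Rightarrow> bool" where
  "permutation_mat P \<longleftrightarrow> (\<exists>p. p permutes (UNIV :: 'n set) \<and>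
      P = (\<chi> i j. if i = p j then 1 else 0))"

definition unitary_diag_mat :: "'n::finite cmat \<Rightarrow> bool" where
  "unitary_diag_mat D \<longleftrightarrow> (\<exists>d. (\<forall>i. norm (d i) = 1) \<and>
      D = (\<chi> i j. if i = j then d i else 0))"

definition enphased_perm_mat :: "'n::finite cmat \<Rightarrow> bool" where
  "enphased_perm_mat S \<longleftrightarrow> (\<exists>D P. unitary_diag_mat D \<and> permutation_mat P \<and> S = D ** P)"

definition C_op :: "'n::finite cmat \<Rightarrow> 'n cmat \<Rightarrow> 'n cmat" where
  "C_op W F = hadamard F W ** adjoint_mat W"

definition D_op :: "'n::finite cmat \<Rightarrow> 'n cmat \<Rightarrow> 'n cmat" where
  "D_op W F = W ** adjoint_mat (hadamard (conj_mat F) W)"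

definition I_op :: "'n::finite cmat \<Rightarrow> 'n cmat \<Rightarrow> 'n cmat" where
  "I_op W = inv (C_op W) \<circ> D_op W"

definition J_op :: "'n::finite cmat \<Rightarrow> 'n cmat \<Rightarrow> 'n cmat" where
  "J_op W = C_op W \<circ> inv (D_op W)"

definition Phi_op :: "'n::finite cmat \<Rightarrow> 'n cmat \<Rightarrow> 'n cmat \<Rightarrow> 'n cmat" where
  "Phi_op A B X = A ** X ** matrix_inv B"

end

theory Submission imports Defs begin

definition GP :: "('n::finite \<Rightarrow> 'n) \<Rightarrow> ('n \<Rightarrow> complex) \<Rightarrow> 'n cmat" where
  "GP q c = (\<chi> i j. if i = q j then c i else 0)"

lemma sum_perm_delta:
  assumes "q permutes (UNIV::'n::finite set)"
  shows "(\<Sum>j\<in>UNIV. if i = q j then f j else (0::complex)) = f (inv q i)"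
proof -
  have "\<And>j. (i = q j) = (j = inv q i)" using permutes_inv_eq[OF assms] by metis
  then show ?thesis by (simp add: sum.delta)
qed

lemma GP_left: assumes "q permutes UNIV"
  shows "(GP q c ** X) $ i $ k = c i * X $ (inv q i) $ k"
proof -
  have "(GP q c ** X) $ i $ k = (\<Sum>j\<in>UNIV. if i = q j then c i * X $ j $ k else 0)"
    by (simp add: GP_def matrix_matrix_mult_def if_distrib if_distribR cong: if_cong)
  also have "\<dots> = c i * X $ (inv q i) $ k" using sum_perm_delta[OF assms] by simp
  finally show ?thesis .
qed

lemma GP_right: assumes "q permutes UNIV"
  shows "(X ** GP q c) $ i $ k = X $ i $ (q k) * c (q k)"
  by (simp add: GP_def matrix_matrix_mult_def if_distrib if_distribR sum.delta cong: if_cong)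

lemma perm_GP: "permutation_mat P \<Longrightarrow> \<exists>p. p permutes UNIV \<and> P = GP p (\<lambda>_. 1)"
  unfolding permutation_mat_def GP_def by auto

lemma diag_GP: "unitary_diag_mat D \<Longrightarrow> \<exists>d. (\<forall>i. norm (d i) = 1) \<and> D = GP id d"
  unfolding unitary_diag_mat_def GP_def by auto

lemma GP_mult: assumes "q permutes UNIV" shows "GP id d ** GP q c = GP q (\<lambda>i. d i * c i)"
  using permutes_id[of UNIV]
  by (simp add: vec_eq_iff GP_left) (simp add: GP_def)

lemma unit_cnj: "norm (z::complex) = 1 \<Longrightarrow> z * cnj z = 1"
  by (metis complex_norm_square mult_1 of_real_1 power_one)

lemma matrix_inv_eq:
  fixes A B :: "'n::finite cmat"
  assumes "A ** B = mat 1" "B ** A = mat 1" shows "matrix_inv A = B"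
proof -
  have ex: "\<exists>B'. A ** B' = mat 1 \<and> B' ** A = mat 1" using assms by blast
  have "A ** matrix_inv A = mat 1 \<and> matrix_inv A ** A = mat 1"
    unfolding matrix_inv_def by (rule someI_ex[OF ex])
  then have "matrix_inv A = (B ** A) ** matrix_inv A" using assms by simp
  also have "\<dots> = B" using \<open>A ** matrix_inv A = mat 1 \<and> _\<close>
    by (metis matrix_mul_assoc matrix_mul_rid)
  finally show ?thesis .
qed

lemma GP_inv:
  assumes q: "q permutes UNIV" and c: "\<forall>i. norm (c i) = 1"
  shows "matrix_inv (GP q c) = GP (inv q) (\<lambda>i. cnj (c (q i)))"
proof (rule matrix_inv_eq)
  have qi: "inv q permutes UNIV" using permutes_inv[OF q] .
  show "GP q c ** GP (inv q) (\<lambda>i. cnj (c (q i))) = mat 1"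
    using q c unit_cnj
    by (simp add: vec_eq_iff GP_left) (auto simp: GP_def mat_def permutes_inverses[OF q] permutes_inv_eq[OF q])
  show "GP (inv q) (\<lambda>i. cnj (c (q i))) ** GP q c = mat 1"
    using q qi c unit_cnj
    by (simp add: vec_eq_iff GP_left permutes_inv_inv[OF q]) (auto simp: GP_def mat_def permutes_inverses[OF q] permutes_inv_eq[OF q] mult.commute inj_eq[OF permutes_inj[OF q]])
qed


definition Lm :: "('n::finite \<Rightarrow> 'n) \<Rightarrow> ('n \<Rightarrow> complex) \<Rightarrow> 'n cmat \<Rightarrow> 'n cmat" where
  "Lm p d G = (\<chi> i k. d i * cnj (d k) * G $ (inv p i) $ (inv p k))"
definition Rm :: "('n::finite \<Rightarrow> 'n) \<Rightarrow> ('n \<Rightarrow> 'n) \<Rightarrow> 'n cmat \<Rightarrow> 'n cmat" where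
  "Rm p r F = (\<chi> a b. F $ (p a) $ (inv r b))"

lemma V_entry:
  assumes p: "p permutes UNIV" and r: "r permutes UNIV"
  shows "(GP p d ** U ** GP r c) $ i $ j = d i * U $ (inv p i) $ (r j) * c (r j)"
  by (simp add: GP_right[OF r] GP_left[OF p])

lemma C_op_entry: "C_op W F $ i $ k = (\<Sum>j\<in>UNIV. F $ i $ j * W $ i $ j * cnj (W $ k $ j))"
  by (simp add: C_op_def hadamard_def adjoint_mat_def matrix_matrix_mult_def)

lemma D_op_entry: "D_op W F $ i $ k = (\<Sum>j\<in>UNIV. W $ i $ j * F $ k $ j * cnj (W $ k $ j))"
  by (simp add: D_op_def hadamard_def adjoint_mat_def conj_mat_def matrix_matrix_mult_def mult.assoc)

lemma C_op_GP:
  assumes p: "p permutes UNIV" and r: "r permutes UNIV" and c: "\<forall>i. norm (c i) = 1"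
  shows "C_op (GP p d ** U ** GP r c) F = Lm p d (C_op U (Rm p r F))"
proof -
  have "C_op (GP p d ** U ** GP r c) F $ i $ k = Lm p d (C_op U (Rm p r F)) $ i $ k" for i k
  proof -
    let ?g = "\<lambda>j. F $ i $ (inv r j) * U $ (inv p i) $ j * cnj (U $ (inv p k) $ j)"
    have "C_op (GP p d ** U ** GP r c) F $ i $ k
        = (\<Sum>j\<in>UNIV. d i * cnj (d k) * (?g (r j) * (c (r j) * cnj (c (r j)))))"
      unfolding C_op_entry V_entry[OF p r] permutes_inverses[OF r]
      by (rule sum.cong) (simp_all add: algebra_simps)
    also have "\<dots> = d i * cnj (d k) * (\<Sum>j\<in>UNIV. ?g (r j))"
      using c unit_cnj by (simp add: sum_distrib_left)
    also have "(\<Sum>j\<in>UNIV. ?g (r j)) = (\<Sum>j\<in>UNIV. ?g j)"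
      using sum.permute[OF r, of ?g] by (simp add: comp_def)
    finally show ?thesis
      by (simp add: Lm_def C_op_entry Rm_def permutes_inverses[OF p])
  qed
  then show ?thesis by (simp add: vec_eq_iff)
qed

lemma D_op_GP:
  assumes p: "p permutes UNIV" and r: "r permutes UNIV" and c: "\<forall>i. norm (c i) = 1"
  shows "D_op (GP p d ** U ** GP r c) F = Lm p d (D_op U (Rm p r F))"
proof -
  have "D_op (GP p d ** U ** GP r c) F $ i $ k = Lm p d (D_op U (Rm p r F)) $ i $ k" for i k
  proof -
    let ?g = "\<lambda>j. U $ (inv p i) $ j * F $ k $ (inv r j) * cnj (U $ (inv p k) $ j)"
    have "D_op (GP p d ** U ** GP r c) F $ i $ k
        = (\<Sum>j\<in>UNIV. d i * cnj (d k) * (?g (r j) * (c (r j) * cnj (c (r j)))))"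
      unfolding D_op_entry V_entry[OF p r] permutes_inverses[OF r]
      by (rule sum.cong) (simp_all add: algebra_simps)
    also have "\<dots> = d i * cnj (d k) * (\<Sum>j\<in>UNIV. ?g (r j))"
      using c unit_cnj by (simp add: sum_distrib_left)
    also have "(\<Sum>j\<in>UNIV. ?g (r j)) = (\<Sum>j\<in>UNIV. ?g j)"
      using sum.permute[OF r, of ?g] by (simp add: comp_def)
    finally show ?thesis
      by (simp add: Lm_def D_op_entry Rm_def permutes_inverses[OF p])
  qed
  then show ?thesis by (simp add: vec_eq_iff)
qed


lemma adjoint_mult: "adjoint_mat (A ** B) = adjoint_mat B ** adjoint_mat (A::'n::finite cmat)"
  by (simp add: vec_eq_iff adjoint_mat_def matrix_matrix_mult_def mult.commute)

lemma adjoint_adjoint[simp]: "adjoint_mat (adjoint_mat A) = A"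
  by (simp add: vec_eq_iff adjoint_mat_def)

lemma conj_conj[simp]: "conj_mat (conj_mat A) = A"
  by (simp add: vec_eq_iff conj_mat_def)

lemma had_cancel1: "no_zero_entries U \<Longrightarrow> hadamard (hadamard X U) (\<chi> i j. inverse (U $ i $ j)) = X"
  by (simp add: vec_eq_iff hadamard_def no_zero_entries_def)
lemma had_cancel2: "no_zero_entries U \<Longrightarrow> hadamard (hadamard X (\<chi> i j. inverse (U $ i $ j))) U = X"
  by (simp add: vec_eq_iff hadamard_def no_zero_entries_def)

lemma bij_C: assumes u: "unitary_mat U" and nz: "no_zero_entries U" shows "bij (C_op U)"
proof (rule o_bij)
  let ?Ui = "\<chi> i j. inverse (U $ i $ j)"
  have uu: "U ** adjoint_mat U = mat 1" "adjoint_mat U ** U = mat 1" using u unitary_mat_def by auto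
  show "(\<lambda>G. hadamard (G ** U) ?Ui) \<circ> C_op U = id"
    by (rule ext) (simp add: C_op_def matrix_mul_assoc[symmetric] uu had_cancel1[OF nz])
  show "C_op U \<circ> (\<lambda>G. hadamard (G ** U) ?Ui) = id"
    by (rule ext) (simp add: C_op_def matrix_mul_assoc[symmetric] uu had_cancel2[OF nz])
qed

lemma bij_D: assumes u: "unitary_mat U" and nz: "no_zero_entries U" shows "bij (D_op U)"
proof (rule o_bij)
  let ?Ui = "\<chi> i j. inverse (U $ i $ j)"
  have uu: "U ** adjoint_mat U = mat 1" "adjoint_mat U ** U = mat 1" using u unitary_mat_def by auto
  show "(\<lambda>H. conj_mat (hadamard (adjoint_mat H ** U) ?Ui)) \<circ> D_op U = id"
    by (rule ext) (simp add: D_op_def adjoint_mult matrix_mul_assoc[symmetric] uu had_cancel1[OF nz])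
  show "D_op U \<circ> (\<lambda>H. conj_mat (hadamard (adjoint_mat H ** U) ?Ui)) = id"
    by (rule ext) (simp add: D_op_def adjoint_mult matrix_mul_assoc uu had_cancel2[OF nz])
qed

lemma bij_L: assumes p: "p permutes UNIV" and d: "\<forall>i. norm (d i) = 1" shows "bij (Lm p d)"
proof (rule o_bij)
  let ?L' = "\<lambda>G. (\<chi> a b. cnj (d (p a)) * d (p b) * G $ (p a) $ (p b)) :: 'a cmat"
  have dd: "d i * cnj (d i) = 1" for i using d unit_cnj by blast
  have e: "x * cnj y * (cnj x * y * z) = (x * cnj x) * (y * cnj y) * z" for x y z :: complex
    by (simp add: algebra_simps)
  have e2: "cnj x * y * (x * cnj y * z) = (x * cnj x) * (y * cnj y) * z" for x y z :: complex
    by (simp add: algebra_simps)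
  show "?L' \<circ> Lm p d = id"
    by (rule ext) (simp add: vec_eq_iff Lm_def permutes_inverses[OF p] e2 dd)
  show "Lm p d \<circ> ?L' = id"
    by (rule ext) (simp add: vec_eq_iff Lm_def permutes_inverses[OF p] e dd)
qed

lemma bij_R: assumes p: "p permutes UNIV" and r: "r permutes UNIV" shows "bij (Rm p r)"
proof (rule o_bij)
  let ?R' = "\<lambda>G. (\<chi> a b. G $ (inv p a) $ (r b)) :: 'a cmat"
  show "?R' \<circ> Rm p r = id"
    by (rule ext) (simp add: vec_eq_iff Rm_def permutes_inverses[OF p] permutes_inverses[OF r])
  show "Rm p r \<circ> ?R' = id"
    by (rule ext) (simp add: vec_eq_iff Rm_def permutes_inverses[OF p] permutes_inverses[OF r])
qed


theorem corollary3p5: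
  fixes U S T D_S D_T P_S P_T :: "'n::finite cmat"
  assumes "unitary_mat U" and "no_zero_entries U"
    and "enphased_perm_mat S" and "enphased_perm_mat T"
    and "unitary_diag_mat D_S" and "permutation_mat P_S" and "S = D_S ** P_S"
    and "unitary_diag_mat D_T" and "permutation_mat P_T" and "T = D_T ** P_T"
  shows "I_op (S ** U ** matrix_inv T)
           = Phi_op P_S P_T \<circ> I_op U \<circ> inv (Phi_op P_S P_T)
    \<and> J_op (S ** U ** matrix_inv T)
           = Phi_op S S \<circ> J_op U \<circ> inv (Phi_op S S)"
proof -
  obtain p where p: "p permutes UNIV" and PS: "P_S = GP p (\<lambda>_. 1)" using perm_GP[OF assms(6)] by blast
  obtain q where q: "q permutes UNIV" and PT: "P_T = GP q (\<lambda>_. 1)" using perm_GP[OF assms(9)] by blast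
  obtain d where d: "\<forall>i. norm (d i) = 1" and DS: "D_S = GP id d" using diag_GP[OF assms(5)] by blast
  obtain e where e: "\<forall>i. norm (e i) = 1" and DT: "D_T = GP id e" using diag_GP[OF assms(8)] by blast
  have S: "S = GP p d" using assms(7) DS PS GP_mult[OF p] by simp
  have T: "T = GP q e" using assms(10) DT PT GP_mult[OF q] by simp
  define r where "r = inv q"
  define c where "c = (\<lambda>i. cnj (e (q i)))"
  have r: "r permutes UNIV" unfolding r_def using permutes_inv[OF q] .
  have c: "\<forall>i. norm (c i) = 1" using e by (simp add: c_def)
  have V: "S ** U ** matrix_inv T = GP p d ** U ** GP r c"
    using S T GP_inv[OF q e] by (simp add: r_def c_def)
  define L where "L = Lm p d"
  define R where "R = Rm p r"
  define C where "C = C_op U"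
  define D where "D = D_op U"
  have CV: "C_op (S ** U ** matrix_inv T) = L \<circ> C \<circ> R"
    unfolding V L_def C_def R_def by (rule ext) (simp add: C_op_GP[OF p r c])
  have DV: "D_op (S ** U ** matrix_inv T) = L \<circ> D \<circ> R"
    unfolding V L_def D_def R_def by (rule ext) (simp add: D_op_GP[OF p r c])
  have bL: "bij L" unfolding L_def using bij_L[OF p d] .
  have bR: "bij R" unfolding R_def using bij_R[OF p r] .
  have bC: "bij C" unfolding C_def using bij_C[OF assms(1,2)] .
  have bD: "bij D" unfolding D_def using bij_D[OF assms(1,2)] .
  have one: "\<forall>i. norm ((\<lambda>_. 1::complex) i) = 1" by simp
  have Phi1: "Phi_op P_S P_T = (\<lambda>X. \<chi> i k. X $ (inv p i) $ (inv q k))"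
    unfolding PS PT Phi_op_def GP_inv[OF q one]
    using permutes_inv[OF q] by (simp add: vec_eq_iff fun_eq_iff GP_right GP_left p)
  have PhiR1: "Phi_op P_S P_T \<circ> R = id" "R \<circ> Phi_op P_S P_T = id"
    unfolding Phi1 R_def Rm_def r_def
    by (simp_all add: fun_eq_iff vec_eq_iff permutes_inverses[OF p] permutes_inv_inv[OF q]
        permutes_inverses[OF q])
  have invPhi1: "inv (Phi_op P_S P_T) = R" by (rule inv_unique_comp[OF PhiR1])
  have Phi1R: "Phi_op P_S P_T = inv R" by (rule inv_unique_comp[OF PhiR1(2,1), symmetric])
  have PhiS: "Phi_op S S = L"
    unfolding S Phi_op_def GP_inv[OF p d] L_def Lm_def
    using permutes_inv[OF p]
    by (simp add: vec_eq_iff fun_eq_iff GP_right GP_left p permutes_inverses[OF p])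
  have partA: "I_op (S ** U ** matrix_inv T) = Phi_op P_S P_T \<circ> I_op U \<circ> inv (Phi_op P_S P_T)"
  proof -
    have "inv (L \<circ> C \<circ> R) = inv R \<circ> inv C \<circ> inv L"
      using bL bC bR by (simp add: o_inv_distrib bij_comp comp_assoc)
    then show ?thesis
      unfolding I_op_def CV DV invPhi1 Phi1R C_def[symmetric] D_def[symmetric]
      using bij_is_inj[OF bL] by (simp add: fun_eq_iff inv_inv_eq[OF bR])
  qed
  have partB: "J_op (S ** U ** matrix_inv T) = Phi_op S S \<circ> J_op U \<circ> inv (Phi_op S S)"
  proof -
    have "inv (L \<circ> D \<circ> R) = inv R \<circ> inv D \<circ> inv L"
      using bL bD bR by (simp add: o_inv_distrib bij_comp comp_assoc)
    then show ?thesis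
      unfolding J_op_def CV DV PhiS C_def[symmetric] D_def[symmetric]
      using bR by (simp add: fun_eq_iff bij_inv_eq_iff surj_f_inv_f bij_is_surj)
  qed
  show ?thesis using partA partB by blast
qed

end
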